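(* Let $\mathbf{s}_1,\dots,\mathbf{s}_l\in\mathbb{Q}^n$, let $\mathcal P$ be the convex hull of $\bigcup_{i=1}^l(\mathbf{s}_i+\mathbb{R}_{\le0}^n)$, $P=\mathcal P\cap\mathbb{Q}^n$, and fix a monomial order $\le_m$. For every $f\in K\{\mathbf{X};P\}$, the set $$\mathrm{Terms}_P(\langle f\rangle)=\{\mathrm{LT}_{\mathbf{r}}(\langle f\rangle):\mathbf{r}\in P\}$$ is finite, where $\langle f\rangle=f\,K\{\mathbf{X};P\}$.
   Context: $K$ is a field complete for a discrete valuation $\mathrm{val}$. For $\mathbf{r}\in\mathbb{Q}^n$, $\mathrm{val}_{\mathbf{r}}(a\mathbf{X}^\alpha)=\mathrm{val}(a)-\mathbf{r}\cdot\alpha$. $K\{\mathbf{X};P\}$ is the set of power series $\sum_{\alpha\in\mathbb{N}^n}a_\alpha\mathbf{X}^\alpha$ such that for every $\mathbf{r}\in P$, $\mathrm{val}_{\mathbf{r}}(a_\alpha\mathbf{X}^\alpha)\to+\infty$ as $|\alpha|\to\infty$. For $\mathbf{r}\in P$ and a nonzero $g\in K\{\mathbf{X};P\}$, $\mathrm{LT}_{\mathbf{r}}(g)$ is the largest term of $g$ for the order $a\mathbf{X}^\alpha<b\mathbf{X}^\beta$ iff $\mathrm{val}_{\mathbf{r}}(a\mathbf{X}^\alpha)>\mathrm{val}_{\mathbf{r}}(b\mathbf{X}^\beta)$, or equal and $\mathbf{X}^\alpha<_m\mathbf{X}^\beta$. For an ideal $J$ of $K\{\mathbf{X};P\}$,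 $\mathrm{LT}_{\mathbf{r}}(J)$ is the ideal of $K[\mathbf{X}]$ generated by $\{\mathrm{LT}_{\mathbf{r}}(g): g\in J\setminus\{0\}\}$. *)

theory Defs
  imports "HOL-Analysis.Analysis" "HOL-Library.Poly_Mapping"
begin

text \<open>Discrete valuation on a field (value group Z, normalized), val of 0 is +infinity
  and is never used: all conditions are stated for nonzero elements.\<close>
definition discrete_valuation :: "('k::field \<Rightarrow> int) \<Rightarrow> bool" where
  "discrete_valuation val \<longleftrightarrow>
     (\<forall>x y. x \<noteq> 0 \<longrightarrow> y \<noteq> 0 \<longrightarrow> val (x * y) = val x + val y) \<and>
     (\<forall>x y. x \<noteq> 0 \<longrightarrow> y \<noteq> 0 \<longrightarrow> x + y \<noteq> 0 \<longrightarrow> val (x + y) \<ge> min (val x) (val y)) \<and>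
     (\<exists>x. x \<noteq> 0 \<and> val x = 1)"

text \<open>Completeness: every val-Cauchy sequence converges (d(x,y) small iff x = y or val(x-y) large).\<close>
definition val_complete :: "('k::field \<Rightarrow> int) \<Rightarrow> bool" where
  "val_complete val \<longleftrightarrow>
     (\<forall>x :: nat \<Rightarrow> 'k.
        (\<forall>M. \<exists>N. \<forall>m\<ge>N. \<forall>k\<ge>N. x m = x k \<or> val (x m - x k) \<ge> M) \<longrightarrow>
        (\<exists>L. \<forall>M. \<exists>N. \<forall>m\<ge>N. x m = L \<or> val (x m - L) \<ge> M))"

definition monomial_order :: "(('n \<Rightarrow>\<^sub>0 nat) \<Rightarrow> ('n \<Rightarrow>\<^sub>0 nat) \<Rightarrow> bool) \<Rightarrow> bool" where
  "monomial_order le \<longleftrightarrow>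
     (\<forall>a. le a a) \<and> (\<forall>a b. le a b \<longrightarrow> le b a \<longrightarrow> a = b) \<and>
     (\<forall>a b c. le a b \<longrightarrow> le b c \<longrightarrow> le a c) \<and> (\<forall>a b. le a b \<or> le b a) \<and>
     (\<forall>a b c. le a b \<longrightarrow> le (a + c) (b + c)) \<and> (\<forall>a. le 0 a)"

type_synonym ('n, 'k) pseries = "('n \<Rightarrow>\<^sub>0 nat) \<Rightarrow> 'k"

definition dotp :: "('n::finite \<Rightarrow> rat) \<Rightarrow> ('n \<Rightarrow>\<^sub>0 nat) \<Rightarrow> rat" where
  "dotp r \<alpha> = (\<Sum>v\<in>UNIV. r v * of_nat (Poly_Mapping.lookup \<alpha> v))"

text \<open>val_r(a X^alpha) = val a - r . alpha  (for a nonzero)\<close>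
definition val_r :: "('k \<Rightarrow> int) \<Rightarrow> ('n::finite \<Rightarrow> rat) \<Rightarrow> 'k \<Rightarrow> ('n \<Rightarrow>\<^sub>0 nat) \<Rightarrow> rat" where
  "val_r val r a \<alpha> = of_int (val a) - dotp r \<alpha>"

definition total_deg :: "('n::finite \<Rightarrow>\<^sub>0 nat) \<Rightarrow> nat" where
  "total_deg \<alpha> = (\<Sum>v\<in>UNIV. Poly_Mapping.lookup \<alpha> v)"

text \<open>K{X;P}: val_r of the terms tends to +infinity for every r in P (zero terms have val +infinity).\<close>
definition conv_series :: "('k::field \<Rightarrow> int) \<Rightarrow> ('n::finite \<Rightarrow> rat) set \<Rightarrow> ('n, 'k) pseries set" where
  "conv_series val P = {f. \<forall>r\<in>P. \<forall>M::rat. \<exists>N. \<forall>\<alpha>. total_deg \<alpha> \<ge> N \<longrightarrow> f \<alpha> \<noteq> 0 \<longrightarrow>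
        val_r val r (f \<alpha>) \<alpha> > M}"

definition ps_mult :: "('n, 'k::field) pseries \<Rightarrow> ('n, 'k) pseries \<Rightarrow> ('n, 'k) pseries" where
  "ps_mult f g = (\<lambda>\<gamma>. \<Sum>p\<in>{(\<alpha>, \<beta>). \<alpha> + \<beta> = \<gamma>}. f (fst p) * g (snd p))"

definition principal_ideal :: "('k::field \<Rightarrow> int) \<Rightarrow> ('n::finite \<Rightarrow> rat) set \<Rightarrow> ('n, 'k) pseries \<Rightarrow> ('n, 'k) pseries set" where
  "principal_ideal val P f = {ps_mult f h | h. h \<in> conv_series val P}"

definition lt_exp :: "('k::field \<Rightarrow> int) \<Rightarrow> (('n \<Rightarrow>\<^sub>0 nat) \<Rightarrow> ('n \<Rightarrow>\<^sub>0 nat) \<Rightarrow> bool) \<Rightarrow>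
     ('n::finite \<Rightarrow> rat) \<Rightarrow> ('n, 'k) pseries \<Rightarrow> ('n \<Rightarrow>\<^sub>0 nat)" where
  "lt_exp val le r g = (THE \<alpha>. g \<alpha> \<noteq> 0 \<and> (\<forall>\<beta>. g \<beta> \<noteq> 0 \<longrightarrow>
       val_r val r (g \<beta>) \<beta> > val_r val r (g \<alpha>) \<alpha> \<or>
       (val_r val r (g \<beta>) \<beta> = val_r val r (g \<alpha>) \<alpha> \<and> le \<beta> \<alpha>)))"

definition LT :: "('k::field \<Rightarrow> int) \<Rightarrow> (('n \<Rightarrow>\<^sub>0 nat) \<Rightarrow> ('n \<Rightarrow>\<^sub>0 nat) \<Rightarrow> bool) \<Rightarrow>
     ('n::finite \<Rightarrow> rat) \<Rightarrow> ('n, 'k) pseries \<Rightarrow> (('n \<Rightarrow>\<^sub>0 nat) \<Rightarrow>\<^sub>0 'k)" where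
  "LT val le r g = Poly_Mapping.single (lt_exp val le r g) (g (lt_exp val le r g))"

definition ideal_gen :: "'a::comm_ring_1 set \<Rightarrow> 'a set" where
  "ideal_gen S = {x. \<exists>F c. finite F \<and> F \<subseteq> S \<and> x = (\<Sum>g\<in>F. c g * g)}"

definition LT_ideal :: "('k::field \<Rightarrow> int) \<Rightarrow> (('n \<Rightarrow>\<^sub>0 nat) \<Rightarrow> ('n \<Rightarrow>\<^sub>0 nat) \<Rightarrow> bool) \<Rightarrow>
     ('n::finite \<Rightarrow> rat) \<Rightarrow> ('n, 'k) pseries set \<Rightarrow> (('n \<Rightarrow>\<^sub>0 nat) \<Rightarrow>\<^sub>0 'k) set" where
  "LT_ideal val le r J = ideal_gen {LT val le r g | g. g \<in> J \<and> g \<noteq> (\<lambda>_. 0)}"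

definition polyhedron :: "nat \<Rightarrow> (nat \<Rightarrow> 'n::finite \<Rightarrow> rat) \<Rightarrow> (real ^ 'n) set" where
  "polyhedron l s = convex hull (\<Union>i\<in>{..<l}. {(\<chi> v. of_rat (s i v)) + d | d. \<forall>v. d $ v \<le> 0})"

definition rat_points :: "(real ^ 'n::finite) set \<Rightarrow> ('n \<Rightarrow> rat) set" where
  "rat_points A = {r. (\<chi> v. of_rat (r v)) \<in> A}"

end

theory Submission
  imports Defs "HOL-Library.Ramsey"
begin

definition pm_le :: "('n \<Rightarrow>\<^sub>0 nat) \<Rightarrow> ('n \<Rightarrow>\<^sub>0 nat) \<Rightarrow> bool" where
  "pm_le a b \<longleftrightarrow> (\<forall>v. Poly_Mapping.lookup a v \<le> Poly_Mapping.lookup b v)"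

lemma pm_le_decomp: "pm_le a b \<Longrightarrow> b = a + (b - a)"
  by (rule poly_mapping_eqI) (simp add: lookup_add lookup_minus pm_le_def)

lemma dotp_add: "dotp r (a + b) = dotp r a + dotp r b"
  by (simp add: dotp_def lookup_add algebra_simps sum.distrib)

lemma total_deg_add: "total_deg (a + b) = total_deg a + total_deg b"
  by (simp add: total_deg_def lookup_add sum.distrib)

lemma finite_deg_lt: "finite {a :: ('n::finite \<Rightarrow>\<^sub>0 nat). total_deg a < N}"
proof -
  let ?S = "{a :: ('n::finite \<Rightarrow>\<^sub>0 nat). total_deg a < N}"
  have "Poly_Mapping.lookup ` ?S \<subseteq> Pi\<^sub>E UNIV (\<lambda>_. {..<N})"
  proof -
    have "Poly_Mapping.lookup a v < N" if "total_deg a < N" for a :: "'n \<Rightarrow>\<^sub>0 nat" and v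
    proof -
      have "Poly_Mapping.lookup a v \<le> total_deg a"
        unfolding total_deg_def by (rule member_le_sum) auto
      then show ?thesis using that by simp
    qed
    then show ?thesis by (auto simp: PiE_UNIV_domain)
  qed
  moreover have "finite (Pi\<^sub>E (UNIV::'n set) (\<lambda>_. {..<N}))" by (rule finite_PiE) auto
  ultimately have "finite (Poly_Mapping.lookup ` ?S)" by (rule finite_subset)
  moreover have "inj_on Poly_Mapping.lookup ?S"
    by (auto simp: inj_on_def intro: poly_mapping_eqI)
  ultimately show ?thesis by (rule finite_imageD)
qed

lemma finite_pairs: "finite {(a, b). a + b = (g :: ('n::finite \<Rightarrow>\<^sub>0 nat))}"
proof -
  have "{(a, b). a + b = g} \<subseteq> (\<lambda>a. (a, g - a)) ` {a. total_deg a < Suc (total_deg g)}"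
  proof
    fix p assume "p \<in> {(a, b). a + b = g}"
    then obtain a b where p: "p = (a, b)" "g = a + b" by auto
    have "total_deg a < Suc (total_deg g)" using p by (simp add: total_deg_add)
    moreover have "p = (a, g - a)" using p by simp
    ultimately show "p \<in> (\<lambda>a. (a, g - a)) ` {a. total_deg a < Suc (total_deg g)}" by blast
  qed
  moreover have "finite ((\<lambda>a. (a, g - a)) ` {a. total_deg a < Suc (total_deg g)})"
    by (rule finite_imageI[OF finite_deg_lt])
  ultimately show ?thesis by (rule finite_subset)
qed

lemma dv_mult: "discrete_valuation val \<Longrightarrow> x \<noteq> 0 \<Longrightarrow> y \<noteq> 0 \<Longrightarrow> val (x * y) = val x + val y"
  by (simp add: discrete_valuation_def)

lemma dv_add: "discrete_valuation val \<Longrightarrow> x \<noteq> 0 \<Longrightarrow> y \<noteq> 0 \<Longrightarrow> x + y \<noteq> 0 \<Longrightarrow> val (x + y) \<ge> min (val x) (val y)"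
  by (simp add: discrete_valuation_def)

lemma dv_one: "discrete_valuation val \<Longrightarrow> val 1 = 0"
  using dv_mult[of val 1 1] by simp

lemma dv_uminus: assumes "discrete_valuation val" shows "val (- x) = val x"
proof (cases "x = 0")
  case True then show ?thesis by simp
next
  case False
  have "val ((-1) * (-1)) = val (-1) + val (-1)" by (rule dv_mult[OF assms]) auto
  then have m: "val (-1) = 0" using dv_one[OF assms] by simp
  have "val ((-1) * x) = val (-1) + val x" by (rule dv_mult[OF assms]) (auto simp: False)
  then show ?thesis using m by simp
qed

lemma dv_sum_gt:
  assumes dv: "discrete_valuation val" and "finite I" and "\<forall>i\<in>I. y i = 0 \<or> val (y i) > t"
  shows "sum y I = 0 \<or> val (sum y I) > t"
  using assms(2,3)
proof (induction I rule: finite_induct)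
  case empty then show ?case by simp
next
  case (insert i F)
  then have IH: "sum y F = 0 \<or> t < val (sum y F)" and yi: "y i = 0 \<or> t < val (y i)" by auto
  show ?case
  proof (cases "y i = 0 \<or> sum y F = 0 \<or> y i + sum y F = 0")
    case True then show ?thesis using IH yi insert by auto
  next
    case False
    then have "val (y i + sum y F) \<ge> min (val (y i)) (val (sum y F))" by (intro dv_add[OF dv]) auto
    then show ?thesis using False IH yi insert by auto
  qed
qed

lemma dv_dominant:
  assumes dv: "discrete_valuation val" and x: "x \<noteq> 0" and S: "S = 0 \<or> val S > val x"
  shows "x + S \<noteq> 0 \<and> val (x + S) = val x"
proof (cases "S = 0")
  case True then show ?thesis using x by simp
next
  case False
  then have vS: "val S > val x" using S by simp
  have ne: "x + S \<noteq> 0"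
  proof
    assume "x + S = 0"
    then have "S = - x" by (metis add_eq_0_iff)
    then show False using vS dv_uminus[OF dv, of x] by simp
  qed
  have 1: "val (x + S) \<ge> min (val x) (val S)" by (rule dv_add[OF dv x False ne])
  have "val ((x + S) + (- S)) \<ge> min (val (x + S)) (val (- S))"
    by (rule dv_add[OF dv ne]) (use False x in auto)
  then have 2: "val x \<ge> min (val (x + S)) (val S)" using dv_uminus[OF dv, of S] by simp
  show ?thesis using 1 2 vS ne by linarith
qed

lemma dv_sum_witness:
  assumes dv: "discrete_valuation val" and "finite I" and "sum y I \<noteq> 0"
  shows "\<exists>i\<in>I. y i \<noteq> 0 \<and> val (y i) \<le> val (sum y I)"
proof (rule ccontr)
  assume "\<not> ?thesis"
  then have "\<forall>i\<in>I. y i = 0 \<or> val (y i) > val (sum y I)" by force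
  from dv_sum_gt[OF dv assms(2) this] assms(3) show False by simp
qed

lemma mo_refl: "monomial_order le \<Longrightarrow> le a a" by (simp add: monomial_order_def)
lemma mo_antisym: "monomial_order le \<Longrightarrow> le a b \<Longrightarrow> le b a \<Longrightarrow> a = b" by (simp add: monomial_order_def)
lemma mo_trans: "monomial_order le \<Longrightarrow> le a b \<Longrightarrow> le b c \<Longrightarrow> le a c"
  unfolding monomial_order_def by (elim conjE allE impE) assumption+
lemma mo_lin: "monomial_order le \<Longrightarrow> le a b \<or> le b a" by (simp add: monomial_order_def)
lemma mo_mono: "monomial_order le \<Longrightarrow> le a b \<Longrightarrow> le (a + c) (b + c)"
  unfolding monomial_order_def by (elim conjE allE impE) assumption+

definition islt :: "('k::field \<Rightarrow> int) \<Rightarrow> (('n \<Rightarrow>\<^sub>0 nat) \<Rightarrow> ('n \<Rightarrow>\<^sub>0 nat) \<Rightarrow> bool) \<Rightarrow>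
     ('n::finite \<Rightarrow> rat) \<Rightarrow> ('n, 'k) pseries \<Rightarrow> ('n \<Rightarrow>\<^sub>0 nat) \<Rightarrow> bool" where
  "islt val le r g \<alpha> \<longleftrightarrow> g \<alpha> \<noteq> 0 \<and> (\<forall>\<beta>. g \<beta> \<noteq> 0 \<longrightarrow>
       val_r val r (g \<beta>) \<beta> > val_r val r (g \<alpha>) \<alpha> \<or>
       (val_r val r (g \<beta>) \<beta> = val_r val r (g \<alpha>) \<alpha> \<and> le \<beta> \<alpha>))"

lemma lt_exp_eq:
  assumes mo: "monomial_order le" and h: "islt val le r g \<alpha>"
  shows "lt_exp val le r g = \<alpha>"
  unfolding lt_exp_def
proof (rule the_equality)
  show "g \<alpha> \<noteq> 0 \<and> (\<forall>\<beta>. g \<beta> \<noteq> 0 \<longrightarrow>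
       val_r val r (g \<beta>) \<beta> > val_r val r (g \<alpha>) \<alpha> \<or>
       (val_r val r (g \<beta>) \<beta> = val_r val r (g \<alpha>) \<alpha> \<and> le \<beta> \<alpha>))"
    using h by (simp add: islt_def)
next
  fix a assume a: "g a \<noteq> 0 \<and> (\<forall>\<beta>. g \<beta> \<noteq> 0 \<longrightarrow>
       val_r val r (g \<beta>) \<beta> > val_r val r (g a) a \<or>
       (val_r val r (g \<beta>) \<beta> = val_r val r (g a) a \<and> le \<beta> a))"
  have 1: "val_r val r (g a) a > val_r val r (g \<alpha>) \<alpha> \<or>
       (val_r val r (g a) a = val_r val r (g \<alpha>) \<alpha> \<and> le a \<alpha>)"
    using h a by (simp add: islt_def)
  have 2: "val_r val r (g \<alpha>) \<alpha> > val_r val r (g a) a \<or>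
       (val_r val r (g \<alpha>) \<alpha> = val_r val r (g a) a \<and> le \<alpha> a)"
    using h a by (simp add: islt_def)
  from 1 2 have "le a \<alpha> \<and> le \<alpha> a" by auto
  then show "a = \<alpha>" using mo_antisym[OF mo] by blast
qed

lemma total_trans_greatest:
  assumes "finite T" "T \<noteq> {}" and tot: "\<And>x y. R x y \<or> R y x"
    and tr: "\<And>x y z. R x y \<Longrightarrow> R y z \<Longrightarrow> R x z"
  shows "\<exists>a\<in>T. \<forall>b\<in>T. R b a"
  using assms(1,2)
proof (induction T rule: finite_ne_induct)
  case (singleton x) then show ?case using tot[of x x] by auto
next
  case (insert x F)
  then obtain m where m: "m \<in> F" "\<forall>b\<in>F. R b m" by auto
  show ?case
  proof (cases "R x m")
    case True then show ?thesis using m by auto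
  next
    case False then have "R m x" using tot by blast
    then show ?thesis using m tr tot by blast
  qed
qed

lemma islt_exists:
  assumes mo: "monomial_order le" and hc: "h \<in> conv_series val P" and r: "r \<in> P"
    and hn: "h \<noteq> (\<lambda>_. 0)"
  shows "\<exists>\<beta>. islt val le r h \<beta>"
proof -
  define vr where "vr b = val_r val r (h b) b" for b
  obtain b1 where b1: "h b1 \<noteq> 0" using hn by auto
  have "\<forall>M::rat. \<exists>N. \<forall>\<alpha>. total_deg \<alpha> \<ge> N \<longrightarrow> h \<alpha> \<noteq> 0 \<longrightarrow> vr \<alpha> > M"
    using hc r unfolding conv_series_def vr_def by simp
  then obtain N where N: "\<forall>\<alpha>. total_deg \<alpha> \<ge> N \<longrightarrow> h \<alpha> \<noteq> 0 \<longrightarrow> vr \<alpha> > vr b1"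
    by blast
  define T where "T = {b. h b \<noteq> 0 \<and> vr b \<le> vr b1}"
  have "T \<subseteq> {a. total_deg a < N}"
  proof
    fix a assume "a \<in> T"
    then have "h a \<noteq> 0" "\<not> vr a > vr b1" by (auto simp: T_def)
    then have "\<not> total_deg a \<ge> N" using N[rule_format, of a] by auto
    then show "a \<in> {a. total_deg a < N}" by simp
  qed
  then have fT: "finite T" by (rule finite_subset[OF _ finite_deg_lt])
  have "b1 \<in> T" using b1 by (simp add: T_def)
  define R where "R x y \<longleftrightarrow> vr x > vr y \<or> (vr x = vr y \<and> le x y)" for x y
  have lin: "le x y \<or> le y x" for x y using mo_lin[OF mo] .
  have letr: "le x z" if "le x y" "le y z" for x y z using mo_trans[OF mo that] .
  have tot: "R x y \<or> R y x" for x y unfolding R_def using lin[of x y] by auto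
  have tr: "R x z" if "R x y" "R y z" for x y z using that letr[of x y z] unfolding R_def by auto
  have "\<exists>a\<in>T. \<forall>b\<in>T. R b a"
    by (rule total_trans_greatest[of T R, OF fT _ tot tr]) (use \<open>b1 \<in> T\<close> in auto)
  then obtain a where a: "a \<in> T" "\<forall>b\<in>T. R b a" by blast
  have "islt val le r h a"
    unfolding islt_def
  proof (intro conjI allI impI)
    show "h a \<noteq> 0" using a by (simp add: T_def)
    fix b assume hb: "h b \<noteq> 0"
    show "val_r val r (h a) a < val_r val r (h b) b \<or>
        val_r val r (h b) b = val_r val r (h a) a \<and> le b a"
    proof (cases "b \<in> T")
      case True then show ?thesis using a unfolding R_def vr_def by auto
    next
      case False then have "vr b > vr b1" using hb by (auto simp: T_def)
      moreover have "vr a \<le> vr b1" using a by (simp add: T_def)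
      ultimately show ?thesis unfolding vr_def by auto
    qed
  qed
  then show ?thesis by blast
qed

lemma mo_le_add:
  assumes mo: "monomial_order le" and "le a a0" "le b b0"
  shows "le (a + b) (a0 + (b0 :: 'n \<Rightarrow>\<^sub>0 nat))"
proof -
  have 1: "le (a + b) (a0 + b)" by (rule mo_mono[OF mo assms(2)])
  have 2: "le (b + a0) (b0 + a0)" by (rule mo_mono[OF mo assms(3)])
  have 3: "le (a0 + b) (a0 + b0)" using 2 by (simp add: add.commute)
  show ?thesis by (rule mo_trans[OF mo 1 3])
qed

lemma mo_cancel_le:
  assumes mo: "monomial_order le" and "le a a0" "le b b0" "a + b = a0 + (b0 :: 'n \<Rightarrow>\<^sub>0 nat)"
  shows "a = a0 \<and> b = b0"
proof -
  have 1: "le (a + b) (a0 + b)" by (rule mo_mono[OF mo assms(2)])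
  have 2: "le (b + a0) (b0 + a0)" by (rule mo_mono[OF mo assms(3)])
  have 3: "le (a0 + b) (a0 + b0)" using 2 by (simp add: add.commute)
  have "le (a0 + b) (a + b)" using 3 assms(4) by simp
  then have "a0 + b = a + b" using 1 mo_antisym[OF mo] by blast
  then have "a0 = a" by simp
  then show ?thesis using assms(4) by simp
qed

lemma islt_min:
  assumes "islt val le r g \<alpha>" "g \<beta> \<noteq> 0"
  shows "val_r val r (g \<beta>) \<beta> \<ge> val_r val r (g \<alpha>) \<alpha>"
  using assms unfolding islt_def by force

lemma islt_eq_le:
  assumes "islt val le r g \<alpha>" "g \<beta> \<noteq> 0" "val_r val r (g \<beta>) \<beta> = val_r val r (g \<alpha>) \<alpha>"
  shows "le \<beta> \<alpha>"
  using assms unfolding islt_def by force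

lemma islt_mult:
  assumes dv: "discrete_valuation val" and mo: "monomial_order le"
    and lf: "islt val le r f a0" and lh: "islt val le r h b0"
  shows "islt val le r (ps_mult f h) (a0 + b0)"
proof -
  define g where "g = ps_mult f h"
  define vf where "vf = val_r val r (f a0) a0"
  define vh where "vh = val_r val r (h b0) b0"
  have f0: "f a0 \<noteq> 0" and h0: "h b0 \<noteq> 0" using lf lh by (auto simp: islt_def)
  have vfmin: "val_r val r (f a) a \<ge> vf" if "f a \<noteq> 0" for a
    using islt_min[OF lf that] vf_def by simp
  have vhmin: "val_r val r (h b) b \<ge> vh" if "h b \<noteq> 0" for b
    using islt_min[OF lh that] vh_def by simp
  have term_val: "of_int (val (f a * h b)) - dotp r (a + b) = val_r val r (f a) a + val_r val r (h b) b"
    if "f a \<noteq> 0" "h b \<noteq> 0" for a b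
    using dv_mult[OF dv that] by (simp add: val_r_def dotp_add)
  have term_small: "le a a0 \<and> le b b0"
    if "f a \<noteq> 0" "h b \<noteq> 0" "of_int (val (f a * h b)) - dotp r (a + b) \<le> vf + vh" for a b
  proof -
    have e: "val_r val r (f a) a + val_r val r (h b) b \<le> vf + vh" using term_val[OF that(1,2)] that(3) by simp
    have "val_r val r (f a) a = vf" using e vfmin[OF that(1)] vhmin[OF that(2)] by simp
    moreover have "val_r val r (h b) b = vh" using e vfmin[OF that(1)] vhmin[OF that(2)] by simp
    ultimately show ?thesis using islt_eq_le[OF lf that(1)] islt_eq_le[OF lh that(2)] vf_def vh_def by simp
  qed
  define I where "I = {(a, b). a + b = a0 + b0}"
  have fI: "finite I" unfolding I_def by (rule finite_pairs)
  have inI: "(a0, b0) \<in> I" by (simp add: I_def)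
  define y where "y p = f (fst p) * h (snd p)" for p
  have gI: "g (a0 + b0) = y (a0, b0) + sum y (I - {(a0, b0)})"
    unfolding g_def ps_mult_def y_def I_def[symmetric]
    using sum.remove[OF fI inI, of y] unfolding y_def by simp
  have y0: "y (a0, b0) \<noteq> 0" using f0 h0 by (simp add: y_def)
  have rest: "\<forall>p\<in>I - {(a0, b0)}. y p = 0 \<or> val (y p) > val (y (a0, b0))"
  proof (intro ballI)
    fix p assume p: "p \<in> I - {(a0, b0)}"
    obtain a b where pab: "p = (a, b)" by (cases p)
    have sab: "a + b = a0 + b0" using p pab by (simp add: I_def)
    show "y p = 0 \<or> val (y p) > val (y (a0, b0))"
    proof (rule ccontr)
      assume "\<not> ?thesis"
      then have ne: "f a \<noteq> 0" "h b \<noteq> 0" and le: "val (f a * h b) \<le> val (f a0 * h b0)"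
        using pab by (auto simp: y_def)
      have "of_int (val (f a * h b)) - dotp r (a + b) \<le> of_int (val (f a0 * h b0)) - dotp r (a0 + b0)"
        using le sab by simp
      also have "\<dots> = vf + vh" using term_val[OF f0 h0] vf_def vh_def by simp
      finally have "le a a0 \<and> le b b0" using term_small[OF ne] by simp
      then have "a = a0 \<and> b = b0" using mo_cancel_le[OF mo _ _ sab] by simp
      then show False using p pab by simp
    qed
  qed
  have "sum y (I - {(a0, b0)}) = 0 \<or> val (sum y (I - {(a0, b0)})) > val (y (a0, b0))"
    using dv_sum_gt[OF dv _ rest] fI by simp
  from dv_dominant[OF dv y0 this]
  have gne: "g (a0 + b0) \<noteq> 0" and gval: "val (g (a0 + b0)) = val (f a0 * h b0)"
    using gI by (auto simp: y_def)
  have vg0: "val_r val r (g (a0 + b0)) (a0 + b0) = vf + vh"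
    using gval term_val[OF f0 h0] vf_def vh_def by (simp add: val_r_def)
  have main: "val_r val r (g c) c > vf + vh \<or> (val_r val r (g c) c = vf + vh \<and> le c (a0 + b0))"
    if gc: "g c \<noteq> 0" for c
  proof -
    define Ic where "Ic = {(a, b). a + b = c}"
    have fIc: "finite Ic" unfolding Ic_def by (rule finite_pairs)
    have gc': "sum y Ic \<noteq> 0" using gc unfolding g_def ps_mult_def y_def Ic_def by simp
    obtain p where p: "p \<in> Ic" "y p \<noteq> 0" "val (y p) \<le> val (sum y Ic)"
      using dv_sum_witness[OF dv fIc gc'] by blast
    obtain a b where pab: "p = (a, b)" by (cases p)
    have sab: "a + b = c" using p pab by (simp add: Ic_def)
    have ne: "f a \<noteq> 0" "h b \<noteq> 0" using p pab by (auto simp: y_def)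
    have vgc: "val (g c) = val (sum y Ic)" unfolding g_def ps_mult_def y_def Ic_def by simp
    have ineq: "of_int (val (f a * h b)) - dotp r (a + b) \<le> val_r val r (g c) c"
      using p pab vgc sab by (simp add: val_r_def y_def)
    have ge: "vf + vh \<le> of_int (val (f a * h b)) - dotp r (a + b)"
      using term_val[OF ne] vfmin[OF ne(1)] vhmin[OF ne(2)] by simp
    show ?thesis
    proof (cases "val_r val r (g c) c > vf + vh")
      case True then show ?thesis by simp
    next
      case False
      then have eq: "val_r val r (g c) c = vf + vh" using ineq ge by simp
      then have "le a a0 \<and> le b b0" using term_small[OF ne] ineq by simp
      then have "le c (a0 + b0)" using mo_le_add[OF mo] sab by blast
      then show ?thesis using eq by simp
    qed
  qed
  show ?thesis
    unfolding islt_def g_def[symmetric]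
    using gne main vg0 by auto
qed

definition emb :: "('n::finite \<Rightarrow> rat) \<Rightarrow> real ^ 'n" where
  "emb x = (\<chi> v. of_rat (x v))"

lemma inner_emb:
  fixes d :: "'n::finite \<Rightarrow>\<^sub>0 nat"
  shows "(\<chi> v. real (Poly_Mapping.lookup d v)) \<bullet> emb x = of_rat (dotp x d)"
  by (simp add: inner_vec_def emb_def dotp_def of_rat_sum of_rat_mult mult.commute)

lemma halfspace:
  fixes r :: "'n::finite \<Rightarrow> rat" and d :: "'n \<Rightarrow>\<^sub>0 nat"
  assumes r: "r \<in> rat_points (polyhedron l s)"
  shows "\<exists>i<l. dotp r d \<le> dotp (s i) d"
proof -
  define a where "a = (\<chi> v. real (Poly_Mapping.lookup d v))"
  have l0: "l > 0"
  proof (rule ccontr)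
    assume "\<not> l > 0" then have "l = 0" by simp
    then show False using r by (simp add: rat_points_def polyhedron_def)
  qed
  define M where "M = Max ((\<lambda>i. a \<bullet> emb (s i)) ` {..<l})"
  have fin: "finite ((\<lambda>i. a \<bullet> emb (s i)) ` {..<l})" by simp
  have ne: "((\<lambda>i. a \<bullet> emb (s i)) ` {..<l}) \<noteq> {}" using l0 by auto
  have sub: "polyhedron l s \<subseteq> {x. a \<bullet> x \<le> M}"
    unfolding polyhedron_def
  proof (rule hull_minimal)
    show "convex {x. a \<bullet> x \<le> M}" by (rule convex_halfspace_le)
    show "(\<Union>i\<in>{..<l}. {(\<chi> v. of_rat (s i v)) + dd |dd. \<forall>v. dd $ v \<le> 0}) \<subseteq> {x. a \<bullet> x \<le> M}"
    proof clarsimp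
      fix i dd assume i: "i < l" and dd: "\<forall>v. (dd :: real ^ 'n) $ v \<le> 0"
      have "a \<bullet> dd \<le> 0" unfolding inner_vec_def a_def
        by (rule sum_nonpos) (use dd in \<open>auto intro: mult_nonneg_nonpos\<close>)
      moreover have "a \<bullet> emb (s i) \<le> M" unfolding M_def using fin i by (intro Max_ge) auto
      ultimately show "a \<bullet> ((\<chi> v. real_of_rat (s i v)) + dd) \<le> M"
        by (simp add: inner_add_right emb_def)
    qed
  qed
  have "a \<bullet> emb r \<le> M" using r sub by (auto simp: rat_points_def emb_def)
  moreover obtain i where i: "i < l" "M = a \<bullet> emb (s i)"
    using Max_in[OF fin ne] unfolding M_def[symmetric] by auto
  ultimately have "of_rat (dotp r d) \<le> (of_rat (dotp (s i) d) :: real)"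
    using inner_emb[of d] unfolding a_def by simp
  then show ?thesis using i by (auto simp: of_rat_less_eq)
qed

lemma s_in_P:
  assumes "i < l" shows "s i \<in> rat_points (polyhedron l s)"
proof -
  let ?U = "(\<Union>i\<in>{..<l}. {(\<chi> v. of_rat (s i v)) + dd |dd. \<forall>v. dd $ v \<le> (0::real)})"
  have "(\<chi> v. of_rat (s i v)) \<in> {(\<chi> v. of_rat (s i v)) + dd |dd. \<forall>v. dd $ v \<le> (0::real)}"
    by (rule CollectI, rule exI[of _ 0]) simp
  then have "(\<chi> v. of_rat (s i v)) \<in> ?U" using assms by (intro UN_I[of i]) auto
  then have "(\<chi> v. of_rat (s i v)) \<in> convex hull ?U" by (rule subsetD[OF hull_subset])
  then show ?thesis unfolding rat_points_def polyhedron_def by simp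
qed

lemma no_desc_nat: assumes "\<And>k. (h :: nat \<Rightarrow> nat) (Suc k) < h k" shows False
proof -
  have "h k + k \<le> h 0" for k
  proof (induction k)
    case 0 then show ?case by simp
  next
    case (Suc k) then show ?case using assms[of k] by simp
  qed
  from this[of "Suc (h 0)"] show False by simp
qed

lemma chain_coords:
  fixes g :: "nat \<Rightarrow> ('n::finite \<Rightarrow>\<^sub>0 nat)"
  assumes "finite V"
  shows "\<exists>Y. infinite Y \<and> (\<forall>i\<in>Y. \<forall>j\<in>Y. i < j \<longrightarrow> (\<forall>v\<in>V. Poly_Mapping.lookup (g i) v \<le> Poly_Mapping.lookup (g j) v))"
  using assms
proof (induction V rule: finite_induct)
  case empty then show ?case by (intro exI[of _ UNIV]) simp
next
  case (insert v V)
  then obtain Y where Y: "infinite Y" "\<forall>i\<in>Y. \<forall>j\<in>Y. i < j \<longrightarrow> (\<forall>v\<in>V. Poly_Mapping.lookup (g i) v \<le> Poly_Mapping.lookup (g j) v)"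
    by blast
  define col where "col X = (if Poly_Mapping.lookup (g (Min X)) v \<le> Poly_Mapping.lookup (g (Max X)) v then 0 else (1::nat))" for X
  have "\<forall>x\<in>Y. \<forall>y\<in>Y. x \<noteq> y \<longrightarrow> col {x, y} < 2" by (simp add: col_def)
  from Ramsey2[OF Y(1) this] obtain Y' t where Y': "Y' \<subseteq> Y" "infinite Y'" "t < 2"
    "\<forall>x\<in>Y'. \<forall>y\<in>Y'. x \<noteq> y \<longrightarrow> col {x, y} = t" by blast
  have colxy: "col {x, y} = 0 \<longleftrightarrow> Poly_Mapping.lookup (g x) v \<le> Poly_Mapping.lookup (g y) v"
    if "x < y" for x y :: nat
    using that by (simp add: col_def min_def max_def)
  show ?case
  proof (cases "t = 0")
    case True
    have "\<forall>i\<in>Y'. \<forall>j\<in>Y'. i < j \<longrightarrow> (\<forall>w\<in>insert v V. Poly_Mapping.lookup (g i) w \<le> Poly_Mapping.lookup (g j) w)"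
    proof (intro ballI impI)
      fix i j w assume ij: "i \<in> Y'" "j \<in> Y'" "i < j" and w: "w \<in> insert v V"
      show "Poly_Mapping.lookup (g i) w \<le> Poly_Mapping.lookup (g j) w"
      proof (cases "w = v")
        case True
        have "i \<noteq> j" using ij(3) by simp
        then have "col {i, j} = 0" using Y'(4) ij(1,2) \<open>t = 0\<close> by blast
        then have "Poly_Mapping.lookup (g i) v \<le> Poly_Mapping.lookup (g j) v" using colxy[OF ij(3)] by blast
        then show ?thesis using True by simp
      next
        case False then show ?thesis using Y(2) Y'(1) ij w by auto
      qed
    qed
    then show ?thesis using Y'(2) by blast
  next
    case False
    then have t1: "t = 1" using Y'(3) by simp
    define e where "e k = enumerate Y' k" for k
    have "Poly_Mapping.lookup (g (e (Suc k))) v < Poly_Mapping.lookup (g (e k)) v" for k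
    proof -
      have lt: "e k < e (Suc k)" unfolding e_def using Y'(2) by (simp add: enumerate_mono)
      have inY: "e k \<in> Y'" "e (Suc k) \<in> Y'" unfolding e_def using Y'(2) by (auto intro: enumerate_in_set)
      have "e k \<noteq> e (Suc k)" using lt by simp
      then have "col {e k, e (Suc k)} = 1" using Y'(4) inY t1 by blast
      then have "\<not> Poly_Mapping.lookup (g (e k)) v \<le> Poly_Mapping.lookup (g (e (Suc k))) v"
        using colxy[OF lt] by simp
      then show ?thesis by simp
    qed
    then show ?thesis using no_desc_nat[of "\<lambda>k. Poly_Mapping.lookup (g (e k)) v"] by blast
  qed
qed

lemma dickson_above:
  fixes L :: "('n::finite \<Rightarrow>\<^sub>0 nat) set"
  assumes "infinite L"
  shows "\<exists>b\<in>L. infinite {a\<in>L. pm_le b a \<and> a \<noteq> b}"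
proof -
  obtain g :: "nat \<Rightarrow> _" where g: "inj g" "range g \<subseteq> L" using infinite_countable_subset[OF assms] by blast
  obtain Y where Y: "infinite Y" "\<forall>i\<in>Y. \<forall>j\<in>Y. i < j \<longrightarrow> (\<forall>v\<in>UNIV. Poly_Mapping.lookup (g i) v \<le> Poly_Mapping.lookup (g j) v)"
    using chain_coords[of "UNIV :: 'n set" g] by auto
  obtain y0 where y0: "y0 \<in> Y" using Y(1) by (metis finite.emptyI ex_in_conv)
  define Y1 where "Y1 = Y - {..y0}"
  have "infinite Y1" unfolding Y1_def using Y(1) by simp
  then have inf: "infinite (g ` Y1)" using g(1) by (simp add: finite_image_iff inj_on_subset)
  have "g ` Y1 \<subseteq> {a\<in>L. pm_le (g y0) a \<and> a \<noteq> g y0}"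
  proof
    fix x assume "x \<in> g ` Y1"
    then obtain y where y: "y \<in> Y1" "x = g y" by blast
    then have yY: "y \<in> Y" "y0 < y" by (auto simp: Y1_def)
    have 1: "g y \<in> L" using g(2) by blast
    have 2: "pm_le (g y0) (g y)" using Y(2) y0 yY unfolding pm_le_def by blast
    have 3: "g y \<noteq> g y0" using g(1) yY unfolding inj_def by (metis less_irrefl)
    show "x \<in> {a\<in>L. pm_le (g y0) a \<and> a \<noteq> g y0}" using 1 2 3 y by simp
  qed
  then have "infinite {a\<in>L. pm_le (g y0) a \<and> a \<noteq> g y0}" using inf finite_subset by blast
  then show ?thesis using g y0 by blast
qed

lemma islt_of_lt_exp:
  assumes mo: "monomial_order le" and "f \<in> conv_series val P" "r \<in> P" "f \<noteq> (\<lambda>_. 0)"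
  shows "islt val le r f (lt_exp val le r f)"
proof -
  obtain a where a: "islt val le r f a" using islt_exists[OF assms] by blast
  then show ?thesis using lt_exp_eq[OF mo a] by simp
qed

lemma finite_small:
  assumes fc: "f \<in> conv_series val P" and sP: "s \<in> P"
  shows "finite {\<gamma>. f \<gamma> \<noteq> 0 \<and> val_r val s (f \<gamma>) \<gamma> \<le> c}"
proof -
  have "\<forall>M::rat. \<exists>N. \<forall>\<alpha>. total_deg \<alpha> \<ge> N \<longrightarrow> f \<alpha> \<noteq> 0 \<longrightarrow> val_r val s (f \<alpha>) \<alpha> > M"
    using fc sP unfolding conv_series_def by simp
  then obtain N where N: "\<forall>\<alpha>. total_deg \<alpha> \<ge> N \<longrightarrow> f \<alpha> \<noteq> 0 \<longrightarrow> val_r val s (f \<alpha>) \<alpha> > c"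
    by blast
  have "{\<gamma>. f \<gamma> \<noteq> 0 \<and> val_r val s (f \<gamma>) \<gamma> \<le> c} \<subseteq> {a. total_deg a < N}"
  proof
    fix a assume "a \<in> {\<gamma>. f \<gamma> \<noteq> 0 \<and> val_r val s (f \<gamma>) \<gamma> \<le> c}"
    then have "f a \<noteq> 0" "\<not> val_r val s (f a) a > c" by auto
    then have "\<not> total_deg a \<ge> N" using N[rule_format, of a] by auto
    then show "a \<in> {a. total_deg a < N}" by simp
  qed
  then show ?thesis by (rule finite_subset[OF _ finite_deg_lt])
qed

lemma core:
  fixes f :: "('n::finite, 'k::field) pseries"
  assumes mo: "monomial_order le"
    and fc: "f \<in> conv_series val (rat_points (polyhedron l s))" and fn: "f \<noteq> (\<lambda>_. 0)"
  shows "finite {lt_exp val le r f | r. r \<in> rat_points (polyhedron l s)}"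
proof (rule ccontr)
  define P where "P = rat_points (polyhedron l s)"
  define L where "L = {lt_exp val le r f | r. r \<in> P}"
  define w where "w i \<gamma> = val_r val (s i) (f \<gamma>) \<gamma>" for i \<gamma>
  assume "infinite {lt_exp val le r f | r. r \<in> rat_points (polyhedron l s)}"
  then have infL: "infinite L" unfolding L_def P_def .
  obtain b where bL: "b \<in> L" and binf: "infinite {a\<in>L. pm_le b a \<and> a \<noteq> b}"
    using dickson_above[OF infL] by blast
  obtain r0 where r0: "r0 \<in> P" "b = lt_exp val le r0 f" using bL unfolding L_def by blast
  have fb: "f b \<noteq> 0"
    using islt_of_lt_exp[OF mo fc[folded P_def] r0(1) fn] r0(2) by (simp add: islt_def)
  have key: "\<exists>i<l. w i a \<le> w i b" if aL: "a \<in> L" and ba: "pm_le b a" for a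
  proof (rule ccontr)
    assume nk: "\<not> ?thesis"
    obtain r where r: "r \<in> P" "a = lt_exp val le r f" using aL unfolding L_def by blast
    have la: "islt val le r f a" using islt_of_lt_exp[OF mo fc[folded P_def] r(1) fn] r(2) by simp
    define d where "d = a - b"
    have ad: "a = b + d" unfolding d_def by (rule pm_le_decomp[OF ba])
    obtain i where i: "i < l" "dotp r d \<le> dotp (s i) d"
      using halfspace[of r l s d] r(1) unfolding P_def by blast
    have "w i b < w i a" using nk i(1) by force
    then have "of_int (val (f b)) - dotp (s i) b < of_int (val (f a)) - dotp (s i) b - dotp (s i) d"
      unfolding w_def val_r_def using ad by (simp add: dotp_add)
    then have "val_r val r (f b) b < val_r val r (f a) a"
      unfolding val_r_def using ad i(2) by (simp add: dotp_add)
    moreover have "val_r val r (f b) b \<ge> val_r val r (f a) a" by (rule islt_min[OF la fb])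
    ultimately show False by simp
  qed
  have "{a\<in>L. pm_le b a \<and> a \<noteq> b} \<subseteq> (\<Union>i\<in>{..<l}. {\<gamma>. f \<gamma> \<noteq> 0 \<and> val_r val (s i) (f \<gamma>) \<gamma> \<le> w i b})"
  proof
    fix a assume a: "a \<in> {a\<in>L. pm_le b a \<and> a \<noteq> b}"
    then obtain i where i: "i < l" "w i a \<le> w i b" using key by blast
    obtain r where r: "r \<in> P" "a = lt_exp val le r f" using a unfolding L_def by blast
    have "f a \<noteq> 0" using islt_of_lt_exp[OF mo fc[folded P_def] r(1) fn] r(2) by (simp add: islt_def)
    then show "a \<in> (\<Union>i\<in>{..<l}. {\<gamma>. f \<gamma> \<noteq> 0 \<and> val_r val (s i) (f \<gamma>) \<gamma> \<le> w i b})"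
      using i unfolding w_def by blast
  qed
  moreover have "finite (\<Union>i\<in>{..<l}. {\<gamma>. f \<gamma> \<noteq> 0 \<and> val_r val (s i) (f \<gamma>) \<gamma> \<le> w i b})"
  proof (rule finite_UN_I)
    show "finite {..<l}" by simp
    fix i assume "i \<in> {..<l}"
    then have "s i \<in> P" unfolding P_def by (intro s_in_P) simp
    then show "finite {\<gamma>. f \<gamma> \<noteq> 0 \<and> val_r val (s i) (f \<gamma>) \<gamma> \<le> w i b}"
      by (rule finite_small[OF fc[folded P_def]])
  qed
  ultimately show False using binf finite_subset by blast
qed

lemma ps_mult_zero: "ps_mult f (\<lambda>_. 0) = (\<lambda>_. 0)"
  by (simp add: ps_mult_def)

lemma ps_mult_zero_left: "ps_mult (\<lambda>_. 0) h = (\<lambda>_. 0)"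
  by (simp add: ps_mult_def)

lemma gens_eq:
  fixes f :: "('n::finite, 'k::field) pseries"
  assumes dv: "discrete_valuation val" and mo: "monomial_order le"
    and fc: "f \<in> conv_series val P" and fn: "f \<noteq> (\<lambda>_. 0)" and r: "r \<in> P"
  shows "{LT val le r g | g. g \<in> principal_ideal val P f \<and> g \<noteq> (\<lambda>_. 0)}
       = {Poly_Mapping.single (lt_exp val le r f + b) c | b c. c \<noteq> 0}"
proof -
  define a0 where "a0 = lt_exp val le r f"
  have la: "islt val le r f a0" unfolding a0_def by (rule islt_of_lt_exp[OF mo fc r fn])
  have fa0: "f a0 \<noteq> 0" using la by (simp add: islt_def)
  show ?thesis
  proof (intro equalityI subsetI)
    fix x :: "('n \<Rightarrow>\<^sub>0 nat) \<Rightarrow>\<^sub>0 'k" assume "x \<in> {LT val le r g | g. g \<in> principal_ideal val P f \<and> g \<noteq> (\<lambda>_. 0)}"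
    then obtain g h where x: "x = LT val le r g" and g: "g = ps_mult f h" and hc: "h \<in> conv_series val P"
      and gn: "g \<noteq> (\<lambda>_. 0)"
      unfolding principal_ideal_def by blast
    have hn: "h \<noteq> (\<lambda>_. 0)" using gn g ps_mult_zero by metis
    have lh: "islt val le r h (lt_exp val le r h)" by (rule islt_of_lt_exp[OF mo hc r hn])
    have lg: "islt val le r g (a0 + lt_exp val le r h)" unfolding g by (rule islt_mult[OF dv mo la lh])
    have e: "lt_exp val le r g = a0 + lt_exp val le r h" by (rule lt_exp_eq[OF mo lg])
    have "g (a0 + lt_exp val le r h) \<noteq> 0" using lg by (simp add: islt_def)
    then show "x \<in> {Poly_Mapping.single (lt_exp val le r f + b) c | b c. c \<noteq> 0}"
      unfolding x LT_def e a0_def[symmetric] by blast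
  next
    fix x :: "('n \<Rightarrow>\<^sub>0 nat) \<Rightarrow>\<^sub>0 'k" assume "x \<in> {Poly_Mapping.single (lt_exp val le r f + b) c | b c. c \<noteq> 0}"
    then obtain b and c :: 'k where x: "x = Poly_Mapping.single (a0 + b) c" and c: "c \<noteq> 0"
      unfolding a0_def by blast
    define h where "h = (\<lambda>\<gamma>. if \<gamma> = b then c / f a0 else 0)"
    have hc: "h \<in> conv_series val P"
      unfolding conv_series_def
    proof (intro CollectI ballI allI)
      fix r' M
      show "\<exists>N. \<forall>\<alpha>. N \<le> total_deg \<alpha> \<longrightarrow> h \<alpha> \<noteq> 0 \<longrightarrow> M < val_r val r' (h \<alpha>) \<alpha>"
      proof (intro exI[of _ "Suc (total_deg b)"] allI impI)
        fix \<alpha> assume "Suc (total_deg b) \<le> total_deg \<alpha>" "h \<alpha> \<noteq> 0"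
        then show "M < val_r val r' (h \<alpha>) \<alpha>" by (auto simp: h_def split: if_splits)
      qed
    qed
    have lh: "islt val le r h b"
      unfolding islt_def using c fa0 mo_refl[OF mo, of b] by (auto simp: h_def)
    define g where "g = ps_mult f h"
    have gJ: "g \<in> principal_ideal val P f" unfolding g_def principal_ideal_def using hc by blast
    have lg: "islt val le r g (a0 + b)" unfolding g_def by (rule islt_mult[OF dv mo la lh])
    have e: "lt_exp val le r g = a0 + b" by (rule lt_exp_eq[OF mo lg])
    have gn: "g \<noteq> (\<lambda>_. 0)" using lg by (auto simp: islt_def)
    define I where "I = {(a, b'). a + b' = a0 + b}"
    have fI: "finite I" unfolding I_def by (rule finite_pairs)
    have "g (a0 + b) = (\<Sum>p\<in>I. f (fst p) * h (snd p))" unfolding g_def ps_mult_def I_def by simp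
    also have "\<dots> = (\<Sum>p\<in>I. if p = (a0, b) then c else 0)"
    proof (rule sum.cong)
      fix p assume p: "p \<in> I"
      obtain a b' where pab: "p = (a, b')" by (cases p)
      have sab: "a + b' = a0 + b" using p pab by (simp add: I_def)
      show "f (fst p) * h (snd p) = (if p = (a0, b) then c else 0)"
      proof (cases "b' = b")
        case True
        then have "a = a0" using sab by simp
        then show ?thesis using True pab fa0 by (simp add: h_def)
      next
        case False then show ?thesis using pab by (simp add: h_def)
      qed
    qed simp
    also have "\<dots> = c" using fI by (simp add: I_def)
    finally have gv: "g (a0 + b) = c" .
    have "x = LT val le r g" unfolding x LT_def e gv ..
    then show "x \<in> {LT val le r g | g. g \<in> principal_ideal val P f \<and> g \<noteq> (\<lambda>_. 0)}"
      using gJ gn by blast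
  qed
qed

theorem mainTheorem13:
  fixes val :: "'k::field \<Rightarrow> int"
    and le :: "('n::finite \<Rightarrow>\<^sub>0 nat) \<Rightarrow> ('n \<Rightarrow>\<^sub>0 nat) \<Rightarrow> bool"
    and l :: nat and s :: "nat \<Rightarrow> 'n \<Rightarrow> rat"
    and f :: "('n, 'k) pseries"
  assumes "discrete_valuation val" and "val_complete val"
    and "monomial_order le"
    and "f \<in> conv_series val (rat_points (polyhedron l s))"
  shows "finite {LT_ideal val le r (principal_ideal val (rat_points (polyhedron l s)) f) | r.
                  r \<in> rat_points (polyhedron l s)}"
proof (cases "f = (\<lambda>_. 0)")
  case True
  have e: "{LT val le r g | g. g \<in> principal_ideal val (rat_points (polyhedron l s)) f \<and> g \<noteq> (\<lambda>_. 0)} = {}" for r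
    unfolding principal_ideal_def True ps_mult_zero_left by blast
  have "LT_ideal val le r (principal_ideal val (rat_points (polyhedron l s)) f) = ideal_gen {}" for r
    unfolding LT_ideal_def e ..
  then have "{LT_ideal val le r (principal_ideal val (rat_points (polyhedron l s)) f) | r.
                  r \<in> rat_points (polyhedron l s)} \<subseteq> {ideal_gen {}}"
    by auto
  then show ?thesis by (rule finite_subset) simp
next
  case False
  define P where "P = rat_points (polyhedron l s)"
  have "{LT_ideal val le r (principal_ideal val P f) | r. r \<in> P}
     \<subseteq> (\<lambda>a. ideal_gen {Poly_Mapping.single (a + b) c | b c. c \<noteq> 0}) ` {lt_exp val le r f | r. r \<in> P}"
  proof
    fix x assume "x \<in> {LT_ideal val le r (principal_ideal val P f) | r. r \<in> P}"
    then obtain r where r: "r \<in> P" "x = LT_ideal val le r (principal_ideal val P f)" by blast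
    have "x = ideal_gen {Poly_Mapping.single (lt_exp val le r f + b) c | b c. c \<noteq> 0}"
      unfolding r(2) LT_ideal_def
      using gens_eq[OF assms(1,3) assms(4)[folded P_def] False r(1)] by simp
    then show "x \<in> (\<lambda>a. ideal_gen {Poly_Mapping.single (a + b) c | b c. c \<noteq> 0}) ` {lt_exp val le r f | r. r \<in> P}"
      using r(1) by blast
  qed
  moreover have "finite {lt_exp val le r f | r. r \<in> P}"
    unfolding P_def by (rule core[OF assms(3,4) False])
  ultimately show ?thesis unfolding P_def[symmetric] by (rule finite_subset[OF _ finite_imageI])
qed

end
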